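(* Let $t=t(n)$. If $t=o(\log n)$, then $$\lim_{n\to\infty}\frac{\log M_{K_{t,t}}(n)}{\binom{n}{2}}=1.$$ If $t=c\log n$ for some constant $c>0$, then $$\lim_{n\to\infty}\frac{\log M_{K_{t,t}}(n)}{\binom{n}{2}}\leq1-2^{-\frac{2}{c}}.$$
   Context: Logarithms are base 2. $K_{t,t}$ is the complete bipartite graph with both parts of size $t$. For graphs $G,G'$ on the same vertex set $[n]$, their symmetric difference $G\oplus G'$ is the graph on $[n]$ whose edge set consists of all edges belonging to exactly one of $G,G'$. For a graph $L$, $M_{L}(n)$ denotes the maximum possible size of a family $\mathcal{G}$ of graphs on vertex set $[n]$ such that for any two distinct $G,G'\in\mathcal{G}$, $G\oplus G'$ contains $L$ as a subgraph. *)

theory Defs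
  imports "HOL-Analysis.Analysis" "HOL-Library.Landau_Symbols" "HOL-Library.Liminf_Limsup"
begin

definition graphs_on :: "nat \<Rightarrow> nat set set set" where
  "graphs_on n = {G. G \<subseteq> {e. e \<subseteq> {1..n} \<and> card e = 2}}"

definition sym_diff_graph :: "nat set set \<Rightarrow> nat set set \<Rightarrow> nat set set" where
  "sym_diff_graph G G' = (G - G') \<union> (G' - G)"

definition contains_subgraph :: "nat \<Rightarrow> 'a set \<times> 'a set set \<Rightarrow> nat set set \<Rightarrow> bool" where
  "contains_subgraph n L G \<longleftrightarrow>
     (\<exists>f. inj_on f (fst L) \<and> f ` fst L \<subseteq> {1..n} \<and> (\<forall>e\<in>snd L. f ` e \<in> G))"

definition K_bip :: "nat \<Rightarrow> (nat + nat) set \<times> (nat + nat) set set" where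
  "K_bip t = (Inl ` {..<t} \<union> Inr ` {..<t}, {{Inl i, Inr j} | i j. i < t \<and> j < t})"

definition good_family :: "'a set \<times> 'a set set \<Rightarrow> nat \<Rightarrow> nat set set set \<Rightarrow> bool" where
  "good_family L n F \<longleftrightarrow> F \<subseteq> graphs_on n \<and>
     (\<forall>G\<in>F. \<forall>G'\<in>F. G \<noteq> G' \<longrightarrow> contains_subgraph n L (sym_diff_graph G G'))"

definition M_L :: "'a set \<times> 'a set set \<Rightarrow> nat \<Rightarrow> nat" where
  "M_L L n = Max (card ` {F. good_family L n F})"

end

theory Submission
  imports Defs "HOL-Real_Asymp.Real_Asymp"
begin

definition EE :: "nat \<Rightarrow> nat set set" where "EE n = {e. e \<subseteq> {1..n} \<and> card e = 2}"

lemma contains_K_iff: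
  "contains_subgraph n (K_bip t) G \<longleftrightarrow>
   (\<exists>S T. S \<subseteq> {1..n} \<and> T \<subseteq> {1..n} \<and> card S = t \<and> card T = t \<and> S \<inter> T = {} \<and>
      (\<forall>s\<in>S. \<forall>u\<in>T. {s,u} \<in> G))"
proof
  assume "contains_subgraph n (K_bip t) G"
  then obtain f where f: "inj_on f (Inl ` {..<t} \<union> Inr ` {..<t})"
     "f ` (Inl ` {..<t} \<union> Inr ` {..<t}) \<subseteq> {1..n}"
     "\<forall>e\<in>{{Inl i, Inr j} | i j. i < t \<and> j < t}. f ` e \<in> G"
    unfolding contains_subgraph_def K_bip_def by auto
  define S where "S = f ` Inl ` {..<t}"
  define T where "T = f ` Inr ` {..<t}"
  have injl: "inj_on f (Inl ` {..<t})" and injr: "inj_on f (Inr ` {..<t})"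
    using f(1) by (auto intro: inj_on_subset)
  have "card S = t" unfolding S_def
    using card_image[OF injl] card_image[of Inl "{..<t}"] by simp
  moreover have "card T = t" unfolding T_def
    using card_image[OF injr] card_image[of Inr "{..<t}"] by simp
  moreover have "S \<inter> T = {}"
  proof (rule ccontr)
    assume "S \<inter> T \<noteq> {}"
    then obtain i j where ij: "i < t" "j < t" "f (Inl i) = f (Inr j)" unfolding S_def T_def by auto
    have "Inl i = (Inr j :: nat + nat)"
      using inj_onD[OF f(1) ij(3)] ij by auto
    then show False by simp
  qed
  moreover have "\<forall>s\<in>S. \<forall>u\<in>T. {s,u} \<in> G"
  proof (intro ballI)
    fix s u assume "s \<in> S" "u \<in> T"
    then obtain i j where ij: "i < t" "j < t" "s = f (Inl i)" "u = f (Inr j)"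
      unfolding S_def T_def by auto
    have "{Inl i, Inr j} \<in> {{Inl i, Inr j} | i j. i < t \<and> j < t}" using ij by blast
    with f(3) have "f ` {Inl i, Inr j} \<in> G" by blast
    then show "{s,u} \<in> G" using ij by simp
  qed
  moreover have "S \<subseteq> {1..n}" "T \<subseteq> {1..n}" using f(2) unfolding S_def T_def by auto
  ultimately show "\<exists>S T. S \<subseteq> {1..n} \<and> T \<subseteq> {1..n} \<and> card S = t \<and> card T = t \<and> S \<inter> T = {} \<and>
      (\<forall>s\<in>S. \<forall>u\<in>T. {s,u} \<in> G)" by blast
next
  assume "\<exists>S T. S \<subseteq> {1..n} \<and> T \<subseteq> {1..n} \<and> card S = t \<and> card T = t \<and> S \<inter> T = {} \<and>
      (\<forall>s\<in>S. \<forall>u\<in>T. {s,u} \<in> G)"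
  then obtain S T where ST: "S \<subseteq> {1..n}" "T \<subseteq> {1..n}" "card S = t" "card T = t" "S \<inter> T = {}"
      "\<forall>s\<in>S. \<forall>u\<in>T. {s,u} \<in> G" by blast
  have fS: "finite S" "finite T" using ST(1,2) finite_subset[of _ "{1..n}"] by auto
  obtain g where g: "bij_betw g {..<t} S"
    using ex_bij_betw_nat_finite[OF fS(1)] ST(3) by (auto simp: lessThan_atLeast0)
  obtain h where h: "bij_betw h {..<t} T"
    using ex_bij_betw_nat_finite[OF fS(2)] ST(4) by (auto simp: lessThan_atLeast0)
  define f where "f = case_sum g h"
  have gS: "g i \<in> S" if "i < t" for i using g that by (auto simp: bij_betw_def)
  have hT: "h i \<in> T" if "i < t" for i using h that by (auto simp: bij_betw_def)
  have gi: "inj_on g {..<t}" "inj_on h {..<t}" using g h by (auto simp: bij_betw_def)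
  have "inj_on f (Inl ` {..<t} \<union> Inr ` {..<t})"
  proof (rule inj_onI)
    fix x y assume x: "x \<in> Inl ` {..<t} \<union> Inr ` {..<t}" and y: "y \<in> Inl ` {..<t} \<union> Inr ` {..<t}"
      and e: "f x = f y"
    show "x = y"
    proof (cases x)
      case (Inl i)
      then show ?thesis
      proof (cases y)
        case (Inl j) then show ?thesis using \<open>x = Inl i\<close> x y e gi(1) by (auto simp: f_def inj_on_def)
      next
        case (Inr j)
        then have ij: "i < t" "j < t" "g i = h j" using \<open>x = Inl i\<close> x y e by (auto simp: f_def)
        then show ?thesis using gS[OF ij(1)] hT[OF ij(2)] ST(5) by (metis disjoint_iff)
      qed
    next
      case (Inr i)
      then show ?thesis
      proof (cases y)
        case (Inr j) then show ?thesis using \<open>x = Inr i\<close> x y e gi(2) by (auto simp: f_def inj_on_def)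
      next
        case (Inl j)
        then have ij: "j < t" "i < t" "g j = h i" using \<open>x = Inr i\<close> x y e by (auto simp: f_def)
        then show ?thesis using gS[OF ij(1)] hT[OF ij(2)] ST(5) by (metis disjoint_iff)
      qed
    qed
  qed
  moreover have "f ` (Inl ` {..<t} \<union> Inr ` {..<t}) \<subseteq> {1..n}"
    using g h ST(1,2) unfolding f_def bij_betw_def by auto
  moreover have "\<forall>e\<in>{{Inl i, Inr j} | i j. i < t \<and> j < t}. f ` e \<in> G"
    using g h ST(6) unfolding f_def bij_betw_def by auto
  ultimately show "contains_subgraph n (K_bip t) G"
    unfolding contains_subgraph_def K_bip_def by auto
qed


lemma finite_EE: "finite (EE n)"
  unfolding EE_def by (rule finite_subset[of _ "Pow {1..n}"]) auto

lemma card_EE: "card (EE n) = n choose 2"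
  unfolding EE_def using n_subsets[of "{1..n}" 2] by simp

lemma graphs_on_EE: "graphs_on n = Pow (EE n)"
  unfolding graphs_on_def EE_def by auto

lemma card_graphs_on: "card (graphs_on n) = 2 ^ (n choose 2)"
  unfolding graphs_on_EE using card_Pow[of "EE n"] card_EE finite_EE by simp

lemma finite_good: "finite {F. good_family L n F}"
  by (rule finite_subset[of _ "Pow (graphs_on n)"])
     (auto simp: good_family_def graphs_on_EE finite_EE)

lemma M_ge: "good_family L n F \<Longrightarrow> card F \<le> M_L L n"
  unfolding M_L_def using finite_good[of L n] by (intro Max_ge) auto

lemma M_obtain: "\<exists>F. good_family L n F \<and> card F = M_L L n"
proof -
  have "{} \<in> {F. good_family L n F}" by (simp add: good_family_def)
  then have "M_L L n \<in> card ` {F. good_family L n F}"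
    unfolding M_L_def using finite_good[of L n] by (intro Max_in) auto
  then show ?thesis by auto
qed

lemma good_card_le: "good_family L n F \<Longrightarrow> card F \<le> 2 ^ (n choose 2)"
  unfolding good_family_def using card_mono[of "graphs_on n" F] card_graphs_on
  by (simp add: graphs_on_EE finite_EE)

lemma M_le: "M_L L n \<le> 2 ^ (n choose 2)"
  using M_obtain[of L n] good_card_le by metis

lemma M_pos: "1 \<le> M_L L n"
proof -
  have "good_family L n {{}}" by (simp add: good_family_def graphs_on_def)
  from M_ge[OF this] show ?thesis by simp
qed

lemma contains_mono: "contains_subgraph n L G \<Longrightarrow> G \<subseteq> G' \<Longrightarrow> contains_subgraph n L G'"
  unfolding contains_subgraph_def by blast

lemma sym_diff_commute: "sym_diff_graph G G' = sym_diff_graph G' G"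
  unfolding sym_diff_graph_def by auto

lemma M_upper_free:
  assumes "H \<subseteq> EE n" "\<not> contains_subgraph n L H"
  shows "M_L L n \<le> 2 ^ (card (EE n - H))"
proof -
  obtain F where F: "good_family L n F" "card F = M_L L n" using M_obtain by blast
  have inj: "inj_on (\<lambda>G. G - H) F"
  proof (rule inj_onI)
    fix G G' assume G: "G \<in> F" "G' \<in> F" "G - H = G' - H"
    show "G = G'"
    proof (rule ccontr)
      assume "G \<noteq> G'"
      then have "contains_subgraph n L (sym_diff_graph G G')"
        using F(1) G(1,2) unfolding good_family_def by blast
      moreover have "sym_diff_graph G G' \<subseteq> H" using G(3) unfolding sym_diff_graph_def by blast
      ultimately show False using assms(2) contains_mono by blast
    qed
  qed
  have sub: "(\<lambda>G. G - H) ` F \<subseteq> Pow (EE n - H)"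
  proof
    fix X assume "X \<in> (\<lambda>G. G - H) ` F"
    then obtain G where "G \<in> F" "X = G - H" by blast
    moreover have "G \<subseteq> EE n" using F(1) \<open>G \<in> F\<close> unfolding good_family_def graphs_on_EE by blast
    ultimately show "X \<in> Pow (EE n - H)" by blast
  qed
  have "card F = card ((\<lambda>G. G - H) ` F)" using card_image[OF inj] by simp
  also have "\<dots> \<le> card (Pow (EE n - H))" by (rule card_mono[OF _ sub]) (simp add: finite_EE)
  also have "\<dots> = 2 ^ card (EE n - H)" by (simp add: card_Pow finite_EE)
  finally show ?thesis using F(2) by simp
qed

lemma GV_bound:
  "2 ^ (n choose 2) \<le> M_L L n * (1 + card {D \<in> graphs_on n. \<not> contains_subgraph n L D})"
proof -
  define B where "B = {D \<in> graphs_on n. \<not> contains_subgraph n L D}"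
  define A where "A = (\<lambda>G'. {G \<in> graphs_on n. sym_diff_graph G G' \<in> B})"
  obtain F where F: "good_family L n F" "card F = M_L L n" using M_obtain by blast
  have Fsub: "F \<subseteq> graphs_on n" using F(1) unfolding good_family_def by blast
  have fing: "finite (graphs_on n)" by (simp add: graphs_on_EE finite_EE)
  have finF: "finite F" using Fsub fing finite_subset by blast
  have cover: "graphs_on n \<subseteq> F \<union> (\<Union>G'\<in>F. A G')"
  proof
    fix G assume G: "G \<in> graphs_on n"
    show "G \<in> F \<union> (\<Union>G'\<in>F. A G')"
    proof (rule ccontr)
      assume nG: "G \<notin> F \<union> (\<Union>G'\<in>F. A G')"
      have GF: "G \<notin> F" using nG by blast
      have sd: "sym_diff_graph G G' \<in> graphs_on n" if "G' \<in> F" for G'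
      proof -
        have "G' \<in> graphs_on n" using Fsub that by blast
        then show ?thesis using G unfolding graphs_on_def sym_diff_graph_def by blast
      qed
      have c1: "contains_subgraph n L (sym_diff_graph G G')" if "G' \<in> F" for G'
      proof (rule ccontr)
        assume "\<not> contains_subgraph n L (sym_diff_graph G G')"
        then have "sym_diff_graph G G' \<in> B" using sd[OF that] unfolding B_def by blast
        then have "G \<in> A G'" using G unfolding A_def by blast
        then show False using nG that by blast
      qed
      have "good_family L n (insert G F)"
        unfolding good_family_def
      proof (intro conjI ballI impI)
        show "insert G F \<subseteq> graphs_on n" using G Fsub by blast
      next
        fix X Y assume XY: "X \<in> insert G F" "Y \<in> insert G F" "X \<noteq> Y"
        show "contains_subgraph n L (sym_diff_graph X Y)"
        proof (cases "X = G")
          case True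
          then have "Y \<in> F" using XY by blast
          then show ?thesis using c1 True by blast
        next
          case False
          then have X: "X \<in> F" using XY by blast
          show ?thesis
          proof (cases "Y = G")
            case True
            then show ?thesis using c1[OF X] sym_diff_commute by metis
          next
            case False
            then have "Y \<in> F" using XY by blast
            then show ?thesis using X XY(3) F(1) unfolding good_family_def by blast
          qed
        qed
      qed
      from M_ge[OF this] have "card (insert G F) \<le> card F" using F(2) by simp
      then show False using GF finF by simp
    qed
  qed
  have finB: "finite B" unfolding B_def using fing by simp
  have each: "card (A G') \<le> card B" for G'
  proof -
    have "inj_on (\<lambda>G. sym_diff_graph G G') (A G')"
    proof (rule inj_onI)
      fix X Y assume "sym_diff_graph X G' = sym_diff_graph Y G'"
      then have "sym_diff_graph (sym_diff_graph X G') G' = sym_diff_graph (sym_diff_graph Y G') G'"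
        by simp
      moreover have "sym_diff_graph (sym_diff_graph Z G') G' = Z" for Z
        unfolding sym_diff_graph_def by blast
      ultimately show "X = Y" by simp
    qed
    moreover have "(\<lambda>G. sym_diff_graph G G') ` (A G') \<subseteq> B"
      unfolding A_def by blast
    ultimately show ?thesis using card_inj_on_le finB by blast
  qed
  have "2 ^ (n choose 2) = card (graphs_on n)" by (simp add: card_graphs_on)
  also have "\<dots> \<le> card (F \<union> (\<Union>G'\<in>F. A G'))"
  proof (rule card_mono[OF _ cover])
    have "finite (A G')" for G' unfolding A_def using fing by simp
    then show "finite (F \<union> (\<Union>G'\<in>F. A G'))" using finF by blast
  qed
  also have "\<dots> \<le> card F + card (\<Union>G'\<in>F. A G')"
    by (rule card_Un_le)
  also have "\<dots> \<le> card F + (\<Sum>G'\<in>F. card (A G'))"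
    using card_UN_le[OF finF, of A] by linarith
  also have "\<dots> \<le> card F + (\<Sum>G'\<in>F. card B)"
    using each by (intro add_left_mono sum_mono) blast
  also have "\<dots> = M_L L n * (1 + card B)" using F(2) by (simp add: algebra_simps)
  finally show ?thesis unfolding B_def .
qed


definition NB :: "nat \<Rightarrow> nat set set \<Rightarrow> nat \<Rightarrow> nat set" where
  "NB n D v = {u \<in> {1..n}. {u, v} \<in> D}"

lemma NB_sub: "NB n D v \<subseteq> {1..n}" unfolding NB_def by blast

lemma card_NB_le: "card (NB n D v) \<le> n"
  using card_mono[OF _ NB_sub, of n D v] by simp

lemma deg_sum:
  assumes "D \<subseteq> EE n"
  shows "card D \<le> (\<Sum>v\<in>{1..n}. card (NB n D v))"
proof -
  have cov: "D \<subseteq> (\<Union>v\<in>{1..n}. {e \<in> D. v \<in> e})"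
  proof
    fix e assume e: "e \<in> D"
    then have "e \<subseteq> {1..n}" "card e = 2" using assms unfolding EE_def by auto
    then obtain x where "x \<in> e" "x \<in> {1..n}" by (metis card_2_iff insertI1 subsetD)
    then show "e \<in> (\<Union>v\<in>{1..n}. {e \<in> D. v \<in> e})" using e by blast
  qed
  have le: "card {e \<in> D. v \<in> e} \<le> card (NB n D v)" for v
  proof -
    have "{e \<in> D. v \<in> e} \<subseteq> (\<lambda>u. {u, v}) ` NB n D v"
    proof
      fix e assume e: "e \<in> {e \<in> D. v \<in> e}"
      then have "e \<subseteq> {1..n}" "card e = 2" "v \<in> e" "e \<in> D" using assms unfolding EE_def by auto
      then obtain x y where xy: "e = {x, y}" "x \<noteq> y" by (meson card_2_iff)
      show "e \<in> (\<lambda>u. {u, v}) ` NB n D v"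
      proof (cases "v = x")
        case True
        then have "y \<in> NB n D v" "e = {y, v}" using xy \<open>e \<subseteq> {1..n}\<close> \<open>e \<in> D\<close>
          unfolding NB_def by (auto simp: insert_commute)
        then show ?thesis by blast
      next
        case False
        then have "v = y" using xy \<open>v \<in> e\<close> by blast
        then have "x \<in> NB n D v" "e = {x, v}" using xy \<open>e \<subseteq> {1..n}\<close> \<open>e \<in> D\<close>
          unfolding NB_def by auto
        then show ?thesis by blast
      qed
    qed
    moreover have "finite (NB n D v)" using finite_subset[OF NB_sub] by blast
    ultimately show ?thesis using card_image_le card_mono
      by (metis (no_types, lifting) finite_imageI le_trans)
  qed
  have finD: "finite D" using assms finite_EE finite_subset by blast
  have "card D \<le> card (\<Union>v\<in>{1..n}. {e \<in> D. v \<in> e})"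
    by (rule card_mono[OF _ cov]) (use finD in auto)
  also have "\<dots> \<le> (\<Sum>v\<in>{1..n}. card {e \<in> D. v \<in> e})" by (rule card_UN_le) simp
  also have "\<dots> \<le> (\<Sum>v\<in>{1..n}. card (NB n D v))" by (intro sum_mono le)
  finally show ?thesis .
qed

lemma card_filter_sum: "finite A \<Longrightarrow> card {x \<in> A. P x} = (\<Sum>x\<in>A. if P x then 1 else (0::nat))"
  using sum.inter_filter[of A "\<lambda>_. 1::nat" P] by simp

lemma KST:
  assumes t: "1 \<le> t" and D: "D \<subseteq> EE n"
    and big: "(t - 1) * (n choose t) < (\<Sum>v\<in>{1..n}. card (NB n D v) choose t)"
  shows "contains_subgraph n (K_bip t) D"
proof -
  define Ts where "Ts = {T. T \<subseteq> {1..n} \<and> card T = t}"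
  define CN where "CN = (\<lambda>T. {v \<in> {1..n}. T \<subseteq> NB n D v})"
  have finTs: "finite Ts" unfolding Ts_def by (rule finite_subset[of _ "Pow {1..n}"]) auto
  have cardTs: "card Ts = n choose t" unfolding Ts_def using n_subsets[of "{1..n}" t] by simp
  have eqv: "card (NB n D v) choose t = card {T \<in> Ts. T \<subseteq> NB n D v}" for v
  proof -
    have "{T \<in> Ts. T \<subseteq> NB n D v} = {T. T \<subseteq> NB n D v \<and> card T = t}"
      unfolding Ts_def using NB_sub[of n D v] by blast
    moreover have "finite (NB n D v)" using finite_subset[OF NB_sub] by blast
    ultimately show ?thesis using n_subsets[of "NB n D v" t] by metis
  qed
  have "(\<Sum>v\<in>{1..n}. card (NB n D v) choose t) = (\<Sum>v\<in>{1..n}. \<Sum>T\<in>Ts. if T \<subseteq> NB n D v then 1 else 0)"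
    unfolding eqv using card_filter_sum[OF finTs] by simp
  also have "\<dots> = (\<Sum>T\<in>Ts. \<Sum>v\<in>{1..n}. if T \<subseteq> NB n D v then 1 else 0)"
    by (rule sum.swap)
  also have "\<dots> = (\<Sum>T\<in>Ts. card (CN T))"
    unfolding CN_def using card_filter_sum[of "{1..n}"] by simp
  finally have eqs: "(\<Sum>v\<in>{1..n}. card (NB n D v) choose t) = (\<Sum>T\<in>Ts. card (CN T))" .
  have "\<exists>T\<in>Ts. t \<le> card (CN T)"
  proof (rule ccontr)
    assume "\<not> (\<exists>T\<in>Ts. t \<le> card (CN T))"
    then have "\<forall>T\<in>Ts. card (CN T) \<le> t - 1" by auto
    then have "(\<Sum>T\<in>Ts. card (CN T)) \<le> (\<Sum>T\<in>Ts. t - 1)" by (intro sum_mono) auto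
    also have "\<dots> = (t - 1) * (n choose t)" using cardTs by simp
    finally show False using big eqs by linarith
  qed
  then obtain T where T: "T \<in> Ts" "t \<le> card (CN T)" by blast
  then obtain S where S: "S \<subseteq> CN T" "card S = t" by (meson obtain_subset_with_card_n)
  have disj: "S \<inter> T = {}"
  proof (rule ccontr)
    assume "S \<inter> T \<noteq> {}"
    then obtain v where v: "v \<in> S" "v \<in> T" by blast
    then have "v \<in> NB n D v" using S(1) unfolding CN_def by blast
    then have "{v, v} \<in> D" unfolding NB_def by blast
    then have "card {v} = 2" using D unfolding EE_def by auto
    then show False by simp
  qed
  have edges: "\<forall>s\<in>S. \<forall>u\<in>T. {s, u} \<in> D"
  proof (intro ballI)
    fix s u assume "s \<in> S" "u \<in> T"
    then have "u \<in> NB n D s" using S(1) unfolding CN_def by blast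
    then have "{u, s} \<in> D" unfolding NB_def by blast
    then show "{s, u} \<in> D" by (simp add: insert_commute)
  qed
  have "S \<subseteq> {1..n}" using S(1) unfolding CN_def by blast
  moreover have "T \<subseteq> {1..n}" "card T = t" using T(1) unfolding Ts_def by auto
  ultimately show ?thesis unfolding contains_K_iff using S(2) disj edges by blast
qed


lemma fact_binom_ge:
  "t \<le> d \<Longrightarrow> (real d - real t) ^ t \<le> fact t * real (d choose t)"
proof (induction t arbitrary: d)
  case 0
  then show ?case by simp
next
  case (Suc t)
  then obtain d' where d: "d = Suc d'" "t \<le> d'" by (cases d) auto
  have IH: "(real d' - real t) ^ t \<le> fact t * real (d' choose t)" using Suc.IH d(2) by blast
  have eq: "fact (Suc t) * real (d choose Suc t) = fact t * (real (Suc d') * real (d' choose t))"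
  proof -
    have h: "real (Suc t) * real (Suc d' choose Suc t) = real (Suc d') * real (d' choose t)"
      by (metis Suc_times_binomial[of t d'] of_nat_mult)
    have "fact (Suc t) * real (d choose Suc t) = fact t * (real (Suc t) * real (Suc d' choose Suc t))"
      using d(1) by (simp only: fact_Suc mult.assoc mult.left_commute)
    also have "\<dots> = fact t * (real (Suc d') * real (d' choose t))" by (simp only: h)
    finally show ?thesis .
  qed
  have nn: "0 \<le> real d' - real t" using d(2) by simp
  have "(real d - real (Suc t)) ^ Suc t = (real d' - real t) * (real d' - real t) ^ t"
    using d(1) by simp
  also have "\<dots> \<le> real (Suc d') * (fact t * real (d' choose t))"
    by (rule mult_mono) (use IH nn in auto)
  also have "\<dots> = fact (Suc t) * real (d choose Suc t)" using eq by (simp add: algebra_simps)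
  finally show ?case .
qed

lemma fact_binom_le: "fact t * (n choose t) \<le> n ^ t"
proof (induction t arbitrary: n)
  case 0
  then show ?case by simp
next
  case (Suc t)
  show ?case
  proof (cases n)
    case 0
    then show ?thesis by simp
  next
    case (Suc n')
    have "fact (Suc t) * (n choose Suc t) = fact t * (Suc t * (Suc n' choose Suc t))"
      using Suc by (simp add: algebra_simps del: binomial_Suc_Suc)
    also have "\<dots> = fact t * (Suc n' * (n' choose t))" by (simp only: Suc_times_binomial)
    also have "\<dots> = Suc n' * (fact t * (n' choose t))" by (simp add: algebra_simps)
    also have "\<dots> \<le> Suc n' * n' ^ t" by (rule mult_left_mono) (use Suc.IH[of n'] in auto)
    also have "\<dots> \<le> Suc n' * Suc n' ^ t" by (intro mult_left_mono power_mono) auto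
    finally show ?thesis using Suc by simp
  qed
qed

lemma binom_le_pow': "n choose t \<le> n ^ t"
proof -
  have "1 * (n choose t) \<le> fact t * (n choose t)" by (intro mult_right_mono) auto
  then show ?thesis using fact_binom_le[of t n] by linarith
qed

lemma sub_ratio:
  "k \<le> m \<Longrightarrow> m \<le> N \<Longrightarrow> real (N - k choose (m - k)) \<le> real (N choose m) * (real m / real N) ^ k"
proof (induction k arbitrary: m N)
  case 0
  then show ?case by simp
next
  case (Suc k)
  obtain m' where m: "m = Suc m'" using Suc.prems by (cases m) auto
  obtain N' where N: "N = Suc N'" using Suc.prems m by (cases N) auto
  have km: "k \<le> m'" "m' \<le> N'" using Suc.prems m N by auto
  have IH: "real (N' - k choose (m' - k)) \<le> real (N' choose m') * (real m' / real N') ^ k"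
    using Suc.IH[OF km] .
  have R: "real N * real (N' choose m') = real m * real (N choose m)"
  proof -
    have "real (Suc m') * real (Suc N' choose Suc m') = real (Suc N') * real (N' choose m')"
      by (metis Suc_times_binomial[of m' N'] of_nat_mult)
    then show ?thesis using m N by (simp add: algebra_simps del: binomial_Suc_Suc)
  qed
  have Npos: "real N > 0" using N by simp
  have R': "real (N' choose m') = real (N choose m) * (real m / real N)"
    using R Npos by (simp add: field_simps)
  have rat: "real m' / real N' \<le> real m / real N"
  proof (cases "N' = 0")
    case True
    then show ?thesis by simp
  next
    case False
    then have "real N' > 0" by simp
    moreover have "real m' * real N \<le> real m * real N'" using m N km by (simp add: algebra_simps)
    ultimately show ?thesis using Npos by (simp add: divide_simps)
  qed
  have "real (N - Suc k choose (m - Suc k)) = real (N' - k choose (m' - k))" using m N by simp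
  also have "\<dots> \<le> real (N' choose m') * (real m' / real N') ^ k" by (rule IH)
  also have "\<dots> \<le> real (N' choose m') * (real m / real N) ^ k"
    by (intro mult_left_mono power_mono rat) auto
  also have "\<dots> = real (N choose m) * (real m / real N) ^ Suc k" using R' by simp
  finally show ?case .
qed

lemma sub_count:
  assumes E: "finite E" and Q: "Q \<subseteq> E" "card Q = k" and m: "m \<le> card E"
  shows "real (card {H. H \<subseteq> E \<and> card H = m \<and> Q \<subseteq> H}) \<le> real (card E choose m) * (real m / real (card E)) ^ k"
proof (cases "k \<le> m")
  case False
  have "{H. H \<subseteq> E \<and> card H = m \<and> Q \<subseteq> H} = {}"
  proof (rule ccontr)
    assume "{H. H \<subseteq> E \<and> card H = m \<and> Q \<subseteq> H} \<noteq> {}"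
    then obtain H where "H \<subseteq> E" "card H = m" "Q \<subseteq> H" by blast
    then have "card Q \<le> card H" using E by (meson card_mono finite_subset)
    then show False using False Q(2) \<open>card H = m\<close> by simp
  qed
  have "0 \<le> real (card E choose m) * (real m / real (card E)) ^ k" by simp
  then show ?thesis unfolding \<open>{H. H \<subseteq> E \<and> card H = m \<and> Q \<subseteq> H} = {}\<close> by simp
next
  case True
  have finQ: "finite Q" using Q E finite_subset by blast
  have sub: "{H. H \<subseteq> E \<and> card H = m \<and> Q \<subseteq> H} \<subseteq> (\<lambda>B. B \<union> Q) ` {B. B \<subseteq> E - Q \<and> card B = m - k}"
  proof
    fix H assume H: "H \<in> {H. H \<subseteq> E \<and> card H = m \<and> Q \<subseteq> H}"
    then have HH: "H \<subseteq> E" "card H = m" "Q \<subseteq> H" by auto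
    have a: "H - Q \<subseteq> E - Q" using HH by blast
    have b: "card (H - Q) = m - k" using card_Diff_subset[OF finQ HH(3)] HH(2) Q(2) by simp
    have c: "H = (H - Q) \<union> Q" using HH by blast
    show "H \<in> (\<lambda>B. B \<union> Q) ` {B. B \<subseteq> E - Q \<and> card B = m - k}"
      using image_eqI[of H "\<lambda>B. B \<union> Q" "H - Q" "{B. B \<subseteq> E - Q \<and> card B = m - k}"] a b c by blast
  qed
  have finEQ: "finite (E - Q)" using E by simp
  have "card {H. H \<subseteq> E \<and> card H = m \<and> Q \<subseteq> H} \<le> card ((\<lambda>B. B \<union> Q) ` {B. B \<subseteq> E - Q \<and> card B = m - k})"
    by (rule card_mono[OF _ sub]) (use finEQ in simp)
  also have "\<dots> \<le> card {B. B \<subseteq> E - Q \<and> card B = m - k}" by (rule card_image_le) (use finEQ in simp)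
  also have "\<dots> = card (E - Q) choose (m - k)" using n_subsets[OF finEQ] by simp
  also have "\<dots> = (card E - k) choose (m - k)" using Q finQ by (simp add: card_Diff_subset)
  finally have "real (card {H. H \<subseteq> E \<and> card H = m \<and> Q \<subseteq> H}) \<le> real ((card E - k) choose (m - k))"
    by linarith
  also have "\<dots> \<le> real (card E choose m) * (real m / real (card E)) ^ k"
    by (rule sub_ratio[OF True m])
  finally show ?thesis .
qed


lemma free_exists:
  assumes m: "m \<le> n choose 2"
    and small: "real (n choose t) ^ 2 * (real m / real (n choose 2)) ^ (t ^ 2) < 1"
  shows "\<exists>H. H \<subseteq> EE n \<and> card H = m \<and> \<not> contains_subgraph n (K_bip t) H"
proof -
  define N where "N = n choose 2"
  define Ts where "Ts = {T. T \<subseteq> {1..n} \<and> card T = t}"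
  define P where "P = {p \<in> Ts \<times> Ts. fst p \<inter> snd p = {}}"
  define QQ where "QQ = (\<lambda>p. (\<lambda>(s, u). {s, u::nat}) ` (fst p \<times> snd p))"
  define A where "A = {H. H \<subseteq> EE n \<and> card H = m}"
  define Bad where "Bad = {H \<in> A. contains_subgraph n (K_bip t) H}"
  define Cnt where "Cnt = (\<lambda>p. {H. H \<subseteq> EE n \<and> card H = m \<and> QQ p \<subseteq> H})"
  have NE: "card (EE n) = N" unfolding N_def by (rule card_EE)
  have finTs: "finite Ts" unfolding Ts_def by (rule finite_subset[of _ "Pow {1..n}"]) auto
  have cardTs: "card Ts = n choose t" unfolding Ts_def using n_subsets[of "{1..n}" t] by simp
  have finP: "finite P" unfolding P_def using finTs by simp
  have cardP: "card P \<le> (n choose t) ^ 2"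
  proof -
    have "card P \<le> card (Ts \<times> Ts)" unfolding P_def by (rule card_mono) (use finTs in auto)
    then show ?thesis using cardTs by (simp add: card_cartesian_product power2_eq_square)
  qed
  have cover: "Bad \<subseteq> (\<Union>p\<in>P. Cnt p)"
  proof
    fix H assume "H \<in> Bad"
    then have H: "H \<subseteq> EE n" "card H = m" "contains_subgraph n (K_bip t) H"
      unfolding Bad_def A_def by auto
    then obtain S T where ST: "S \<subseteq> {1..n}" "T \<subseteq> {1..n}" "card S = t" "card T = t" "S \<inter> T = {}"
      "\<forall>s\<in>S. \<forall>u\<in>T. {s,u} \<in> H" unfolding contains_K_iff by blast
    have "(S, T) \<in> P" unfolding P_def Ts_def using ST by auto
    moreover have "QQ (S, T) \<subseteq> H" unfolding QQ_def using ST(6) by auto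
    ultimately show "H \<in> (\<Union>p\<in>P. Cnt p)" unfolding Cnt_def using H by blast
  qed
  have each: "real (card (Cnt p)) \<le> real (N choose m) * (real m / real N) ^ (t ^ 2)" if p: "p \<in> P" for p
  proof -
    obtain S T where pST: "p = (S, T)" by (cases p)
    have ST: "S \<subseteq> {1..n}" "T \<subseteq> {1..n}" "card S = t" "card T = t" "S \<inter> T = {}"
      using p unfolding pST P_def Ts_def by auto
    have finST: "finite S" "finite T" using ST(1,2) finite_subset by auto
    have QE: "QQ p \<subseteq> EE n"
    proof
      fix e assume "e \<in> QQ p"
      then obtain s u where su: "s \<in> S" "u \<in> T" "e = {s, u}" unfolding QQ_def pST by auto
      then have "s \<noteq> u" using ST(5) by blast
      then show "e \<in> EE n" unfolding EE_def using su ST(1,2) by auto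
    qed
    have inj: "inj_on (\<lambda>(s, u). {s, u::nat}) (S \<times> T)"
    proof (rule inj_onI)
      fix x y assume xy: "x \<in> S \<times> T" "y \<in> S \<times> T" "(\<lambda>(s, u). {s, u::nat}) x = (\<lambda>(s, u). {s, u}) y"
      obtain s u where x: "x = (s, u)" by (cases x)
      obtain s' u' where y: "y = (s', u')" by (cases y)
      have mem: "s \<in> S" "u \<in> T" "s' \<in> S" "u' \<in> T" using xy x y by auto
      have "{s, u} = {s', u'}" using xy(3) x y by simp
      then have "(s = s' \<and> u = u') \<or> (s = u' \<and> u = s')" by (simp add: doubleton_eq_iff)
      then show "x = y" using mem ST(5) x y by blast
    qed
    have cQ: "card (QQ p) = t ^ 2"
      unfolding QQ_def pST using card_image[OF inj] ST(3,4)
      by (simp add: card_cartesian_product power2_eq_square)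
    have "m \<le> card (EE n)" using m NE N_def by simp
    from sub_count[OF finite_EE QE cQ this] show ?thesis unfolding Cnt_def NE .
  qed
  have finA: "finite A" unfolding A_def by (rule finite_subset[of _ "Pow (EE n)"]) (auto simp: finite_EE)
  have cardA: "card A = N choose m" unfolding A_def using n_subsets[OF finite_EE, of n m] NE by simp
  have Apos: "0 < real (N choose m)" using m N_def by simp
  have "real (card Bad) \<le> real (card (\<Union>p\<in>P. Cnt p))"
  proof -
    have "finite (\<Union>p\<in>P. Cnt p)" unfolding Cnt_def using finP
      by (intro finite_UN_I) (auto intro: finite_subset[of _ "Pow (EE n)"] simp: finite_EE)
    then show ?thesis using card_mono[OF _ cover] by simp
  qed
  also have "\<dots> \<le> real (\<Sum>p\<in>P. card (Cnt p))" using card_UN_le[OF finP, of Cnt] by linarith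
  also have "\<dots> = (\<Sum>p\<in>P. real (card (Cnt p)))" by simp
  also have "\<dots> \<le> (\<Sum>p\<in>P. real (N choose m) * (real m / real N) ^ (t ^ 2))"
    by (rule sum_mono) (rule each)
  also have "\<dots> = real (card P) * (real (N choose m) * (real m / real N) ^ (t ^ 2))" by simp
  also have "\<dots> \<le> real (n choose t) ^ 2 * (real (N choose m) * (real m / real N) ^ (t ^ 2))"
  proof (rule mult_right_mono)
    show "real (card P) \<le> real (n choose t) ^ 2" using cardP by (metis of_nat_le_iff of_nat_power)
  qed simp
  also have "\<dots> = real (N choose m) * (real (n choose t) ^ 2 * (real m / real N) ^ (t ^ 2))" by simp
  also have "\<dots> < real (N choose m) * 1"
    by (rule mult_strict_left_mono) (use small Apos N_def in auto)
  finally have "card Bad < card A" using cardA by simp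
  moreover have "finite Bad" using finA unfolding Bad_def by simp
  ultimately have "\<not> A \<subseteq> Bad" using card_mono[of Bad A] by (meson card_mono leD)
  then obtain H where "H \<in> A" "H \<notin> Bad" by blast
  then show ?thesis unfolding A_def Bad_def by blast
qed


lemma pow_sum:
  fixes x :: real
  assumes "finite E"
  shows "(\<Sum>D\<in>Pow E. x ^ card D) = (1 + x) ^ card E"
  using assms
proof (induction E rule: finite_induct)
  case empty
  then show ?case by simp
next
  case (insert a F)
  have disj: "Pow F \<inter> insert a ` Pow F = {}" using insert.hyps(2) by auto
  have inj: "inj_on (insert a) (Pow F)"
  proof (rule inj_onI)
    fix X Y assume "X \<in> Pow F" "Y \<in> Pow F" "insert a X = insert a Y"
    then show "X = Y" using insert.hyps(2) by (metis PowD insert_ident subset_iff)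
  qed
  have finP: "finite (Pow F)" using insert.hyps(1) by simp
  have "(\<Sum>D\<in>Pow (insert a F). x ^ card D) = (\<Sum>D\<in>Pow F \<union> insert a ` Pow F. x ^ card D)"
    by (simp add: Pow_insert)
  also have "\<dots> = (\<Sum>D\<in>Pow F. x ^ card D) + (\<Sum>D\<in>insert a ` Pow F. x ^ card D)"
    by (rule sum.union_disjoint) (use finP disj in auto)
  also have "(\<Sum>D\<in>insert a ` Pow F. x ^ card D) = (\<Sum>D\<in>Pow F. x ^ card (insert a D))"
    by (rule sum.reindex[OF inj, unfolded comp_def])
  also have "\<dots> = (\<Sum>D\<in>Pow F. x * x ^ card D)"
  proof (rule sum.cong[OF refl])
    fix D assume "D \<in> Pow F"
    then have "finite D" "a \<notin> D" using insert.hyps finite_subset by auto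
    then show "x ^ card (insert a D) = x * x ^ card D" by simp
  qed
  also have "\<dots> = x * (1 + x) ^ card F" by (metis sum_distrib_left insert.IH)
  finally show ?case using insert.IH insert.hyps by (simp add: algebra_simps)
qed

lemma count_small:
  fixes x K :: real
  assumes E: "finite E" and x: "0 < x" "x \<le> 1"
  shows "real (card {D \<in> Pow E. real (card D) \<le> K}) * x powr K \<le> (1 + x) ^ card E"
proof -
  have fin: "finite {D \<in> Pow E. real (card D) \<le> K}" using E by simp
  have "real (card {D \<in> Pow E. real (card D) \<le> K}) * x powr K = (\<Sum>D\<in>{D \<in> Pow E. real (card D) \<le> K}. x powr K)"
    by simp
  also have "\<dots> \<le> (\<Sum>D\<in>{D \<in> Pow E. real (card D) \<le> K}. x ^ card D)"
  proof (rule sum_mono)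
    fix D assume "D \<in> {D \<in> Pow E. real (card D) \<le> K}"
    then have "real (card D) \<le> K" by simp
    then have "x powr K \<le> x powr real (card D)" using powr_mono'[of "real (card D)" K x] x by simp
    also have "\<dots> = x ^ card D" using x by (simp add: powr_realpow)
    finally show "x powr K \<le> x ^ card D" .
  qed
  also have "\<dots> \<le> (\<Sum>D\<in>Pow E. x ^ card D)"
    by (rule sum_mono2) (use E x in auto)
  also have "\<dots> = (1 + x) ^ card E" by (rule pow_sum[OF E])
  finally show ?thesis .
qed


lemma choose2_real: "real (n choose 2) = real n * (real n - 1) / 2"
proof (cases n)
  case 0 then show ?thesis by simp
next
  case (Suc m)
  have "Suc 1 * (Suc m choose Suc 1) = Suc m * (m choose 1)" by (rule Suc_times_binomial)
  then have "2 * (n choose 2) = n * m" using Suc by (simp add: numeral_2_eq_2)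
  then have "2 * real (n choose 2) = real n * real m" by (metis of_nat_mult of_nat_numeral)
  then show ?thesis using Suc by (simp add: field_simps)
qed

lemma KST_dense:
  fixes \<delta> :: real
  assumes \<delta>: "0 < \<delta>" "\<delta> \<le> 1" and n: "2 \<le> n" and t: "1 \<le> t" and D: "D \<subseteq> EE n"
    and dense: "\<delta> * real (n choose 2) \<le> real (card D)"
    and A1: "real t \<le> \<delta> * real n / 16"
    and A2: "real t \<le> (\<delta> * real n / 8) * (\<delta> / 16) ^ t"
  shows "contains_subgraph n (K_bip t) D"
proof -
  define a where "a = \<delta> * (real n - 1) / 4"
  define Hv where "Hv = {v \<in> {1..n}. a \<le> real (card (NB n D v))}"
  have finHv: "finite Hv" unfolding Hv_def by simp
  have Hvsub: "Hv \<subseteq> {1..n}" unfolding Hv_def by blast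
  have s1: "real (card D) \<le> (\<Sum>v\<in>{1..n}. real (card (NB n D v)))"
    using deg_sum[OF D] by (metis of_nat_le_iff of_nat_sum)
  have s2: "(\<Sum>v\<in>{1..n}. real (card (NB n D v))) \<le> (\<Sum>v\<in>{1..n}. (if v \<in> Hv then real n else a))"
  proof (rule sum_mono)
    fix v assume v: "v \<in> {1..n}"
    show "real (card (NB n D v)) \<le> (if v \<in> Hv then real n else a)"
      using card_NB_le[of n D v] v unfolding Hv_def by auto
  qed
  have s3: "(\<Sum>v\<in>{1..n}. (if v \<in> Hv then real n else a)) = real (card Hv) * real n + real (card ({1..n} - Hv)) * a"
  proof -
    have "(\<Sum>v\<in>{1..n}. (if v \<in> Hv then real n else a)) = (\<Sum>v\<in>{1..n} \<inter> Hv. real n) + (\<Sum>v\<in>{1..n} - Hv. a)"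
      using sum.If_cases[of "{1..n}" "\<lambda>v. v \<in> Hv" "\<lambda>_. real n" "\<lambda>_. a"]
      by (simp add: Diff_eq)
    moreover have "{1..n} \<inter> Hv = Hv" using Hvsub by blast
    ultimately show ?thesis by simp
  qed
  have a0: "0 \<le> a" unfolding a_def using \<delta> n by simp
  have s4: "real (card ({1..n} - Hv)) * a \<le> real n * a"
  proof (rule mult_right_mono[OF _ a0])
    have "card ({1..n} - Hv) \<le> card {1..n}" by (rule card_mono) auto
    then show "real (card ({1..n} - Hv)) \<le> real n" by simp
  qed
  have npos: "0 < real n" using n by simp
  have "\<delta> * (real n * (real n - 1) / 2) \<le> real (card Hv) * real n + real n * a"
    using dense s1 s2 s3 s4 unfolding choose2_real by linarith
  moreover have "real n * (2 * a) = \<delta> * (real n * (real n - 1) / 2)"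
    unfolding a_def by (simp add: field_simps)
  ultimately have "real n * (2 * a) \<le> real n * (real (card Hv) + a)"
    by (simp add: algebra_simps)
  then have Hva: "a \<le> real (card Hv)" using npos by simp
  have a8: "\<delta> * real n / 8 \<le> a" unfolding a_def using \<delta> n by (simp add: field_simps)
  have at: "\<delta> * real n / 16 \<le> a - real t" using a8 A1 by simp
  have "0 \<le> \<delta> * real n / 16" using \<delta> by simp
  then have at0: "0 \<le> a - real t" using at by linarith
  have fpos: "0 < (fact t :: real)" by simp
  have v_bound: "(a - real t) ^ t \<le> fact t * real (card (NB n D v) choose t)" if "v \<in> Hv" for v
  proof -
    have le: "a \<le> real (card (NB n D v))" using that unfolding Hv_def by blast
    then have "t \<le> card (NB n D v)" using at0 by linarith
    from fact_binom_ge[OF this]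
    have "(real (card (NB n D v)) - real t) ^ t \<le> fact t * real (card (NB n D v) choose t)" .
    moreover have "(a - real t) ^ t \<le> (real (card (NB n D v)) - real t) ^ t"
      by (rule power_mono) (use le at0 in auto)
    ultimately show ?thesis by linarith
  qed
  have "real t * real n ^ t \<le> (\<delta> * real n / 8) * (\<delta> / 16) ^ t * real n ^ t"
    by (rule mult_right_mono[OF A2]) simp
  also have "\<dots> = (\<delta> * real n / 8) * (\<delta> * real n / 16) ^ t"
    by (simp add: power_mult_distrib field_simps)
  also have "\<dots> \<le> a * (a - real t) ^ t"
    by (rule mult_mono[OF a8 power_mono[OF at]]) (use \<delta> a0 at0 in auto)
  also have "\<dots> \<le> real (card Hv) * (a - real t) ^ t"
    by (rule mult_right_mono[OF Hva]) (use at0 in simp)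
  also have "\<dots> = (\<Sum>v\<in>Hv. (a - real t) ^ t)" by simp
  also have "\<dots> \<le> (\<Sum>v\<in>Hv. fact t * real (card (NB n D v) choose t))"
    by (rule sum_mono) (rule v_bound)
  also have "\<dots> \<le> (\<Sum>v\<in>{1..n}. fact t * real (card (NB n D v) choose t))"
    by (rule sum_mono2) (use Hvsub in auto)
  also have "\<dots> = fact t * real (\<Sum>v\<in>{1..n}. card (NB n D v) choose t)"
    by (simp add: sum_distrib_left)
  finally have big: "real t * real n ^ t \<le> fact t * real (\<Sum>v\<in>{1..n}. card (NB n D v) choose t)" .
  have "fact t * real ((t - 1) * (n choose t)) = real (t - 1) * (fact t * real (n choose t))"
    by simp
  also have "\<dots> \<le> real (t - 1) * real n ^ t"
  proof (rule mult_left_mono)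
    have "real (fact t * (n choose t)) \<le> real (n ^ t)" using fact_binom_le[of t n] by (metis of_nat_le_iff)
    then show "fact t * real (n choose t) \<le> real n ^ t" by simp
  qed simp
  also have "\<dots> < real t * real n ^ t"
    by (rule mult_strict_right_mono) (use t npos in auto)
  finally have "fact t * real ((t - 1) * (n choose t)) < fact t * real (\<Sum>v\<in>{1..n}. card (NB n D v) choose t)"
    using big by linarith
  then have "real ((t - 1) * (n choose t)) < real (\<Sum>v\<in>{1..n}. card (NB n D v) choose t)"
    using fpos by (simp only: mult_less_cancel_left_pos)
  then have "(t - 1) * (n choose t) < (\<Sum>v\<in>{1..n}. card (NB n D v) choose t)"
    by (simp only: of_nat_less_iff)
  then show ?thesis by (rule KST[OF t D])
qed


lemma KST_eventually:
  fixes \<delta> :: real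
  assumes \<delta>: "0 < \<delta>" "\<delta> \<le> 1"
  shows "\<forall>\<^sub>F n in sequentially. \<forall>t. 1 \<le> t \<and> real t \<le> log 2 (real n) / (2 * log 2 (16 / \<delta>)) \<longrightarrow>
            (\<forall>D. D \<subseteq> EE n \<and> \<delta> * real (n choose 2) \<le> real (card D) \<longrightarrow> contains_subgraph n (K_bip t) D)"
proof -
  define L where "L = log 2 (16 / \<delta>)"
  have "log 2 16 \<le> log 2 (16 / \<delta>)"
    using \<delta> by (subst log_le_cancel_iff) (auto simp: field_simps)
  moreover have "log 2 (16::real) = 4"
  proof -
    have "log 2 ((2::real) ^ (4::nat)) = real (4::nat)" by (rule log_pow_cancel) auto
    then show ?thesis by simp
  qed
  ultimately have L4: "4 \<le> L" unfolding L_def by simp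
  have ev1: "\<forall>\<^sub>F n in sequentially. log 2 (real n) \<le> \<delta> * real n / 16"
    using \<delta> by real_asymp
  have ev2: "\<forall>\<^sub>F n in sequentially. log 2 (real n) \<le> \<delta> / 8 * real n powr (1/2)"
    using \<delta> by real_asymp
  have ev3: "\<forall>\<^sub>F n in sequentially. 2 \<le> n" by (rule eventually_ge_at_top)
  show ?thesis
    using ev1 ev2 ev3
  proof eventually_elim
    case (elim n)
    show ?case
    proof (intro allI impI)
      fix t D assume tt: "1 \<le> t \<and> real t \<le> log 2 (real n) / (2 * log 2 (16 / \<delta>))"
        and DD: "D \<subseteq> EE n \<and> \<delta> * real (n choose 2) \<le> real (card D)"
      have t1: "1 \<le> t" and tL: "real t \<le> log 2 (real n) / (2 * L)" using tt unfolding L_def by auto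
      have npos: "0 < real n" using elim(3) by simp
      have logn: "0 \<le> log 2 (real n)" using elim(3) by simp
      have tL': "2 * L * real t \<le> log 2 (real n)" using tL L4 by (simp add: field_simps)
      have tlog: "real t \<le> log 2 (real n)"
      proof -
        have "1 * real t \<le> (2 * L) * real t" by (rule mult_right_mono) (use L4 in auto)
        then show ?thesis using tL' by linarith
      qed
      have A1: "real t \<le> \<delta> * real n / 16" using tlog elim(1) by linarith
      have dpos: "0 < \<delta> / 16" using \<delta> by simp
      have d16: "\<delta> / 16 = 2 powr (- L)"
      proof -
        have "2 powr L = 16 / \<delta>" unfolding L_def using \<delta> by simp
        then show ?thesis by (simp add: powr_minus field_simps)
      qed
      have "(\<delta> / 16) ^ t = (\<delta> / 16) powr real t" using dpos by (simp add: powr_realpow)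
      also have "\<dots> = 2 powr (- L * real t)" unfolding d16 by (simp add: powr_powr)
      finally have e1: "(\<delta> / 16) ^ t = 2 powr (- L * real t)" .
      have p1: "2 powr (- (log 2 (real n)) / 2) \<le> 2 powr (- L * real t)"
        using tL' by (intro powr_mono) auto
      have p2: "2 powr (- (log 2 (real n)) / 2) = real n powr (- 1 / 2)"
      proof -
        have "2 powr (- (log 2 (real n)) / 2) = (2 powr (log 2 (real n))) powr (- 1 / 2)"
          by (simp add: powr_powr)
        also have "\<dots> = real n powr (- 1 / 2)" using npos by simp
        finally show ?thesis .
      qed
      have e2: "real n powr (- 1 / 2) \<le> (\<delta> / 16) ^ t" using p1 by (simp only: p2 e1)
      have "real t \<le> \<delta> / 8 * real n powr (1/2)" using tlog elim(2) by linarith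
      also have "\<dots> = (\<delta> * real n / 8) * real n powr (- 1 / 2)"
      proof -
        have "real n powr (1/2) = real n powr 1 * real n powr (- 1 / 2)"
          using powr_add[of "real n" 1 "- 1 / 2"] by simp
        then show ?thesis using npos by simp
      qed
      also have "\<dots> \<le> (\<delta> * real n / 8) * (\<delta> / 16) ^ t"
        by (rule mult_left_mono[OF e2]) (use \<delta> npos in simp)
      finally have A2: "real t \<le> (\<delta> * real n / 8) * (\<delta> / 16) ^ t" .
      show "contains_subgraph n (K_bip t) D"
        using KST_dense[OF \<delta> elim(3) t1 _ _ A1 A2] DD by blast
    qed
  qed
qed


lemma contains_K0: "contains_subgraph n (K_bip 0) G"
  unfolding contains_K_iff by (rule exI[of _ "{}"], rule exI[of _ "{}"]) simp

lemma part1_lower: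
  fixes \<delta> :: real and N :: nat
  assumes \<delta>: "0 < \<delta>" "\<delta> \<le> 1" and N: "N = n choose 2" and Npos: "0 < N"
    and free_small: "\<forall>D. D \<subseteq> EE n \<and> \<delta> * real N \<le> real (card D) \<longrightarrow> contains_subgraph n L D"
  shows "real N - 1 - real N * (log 2 (1 + \<delta>) + \<delta> * log 2 (1 / \<delta>)) \<le> log 2 (real (M_L L n))"
proof -
  define B where "B = {D \<in> graphs_on n. \<not> contains_subgraph n L D}"
  define X where "X = (1 + \<delta>) ^ N / \<delta> powr (\<delta> * real N)"
  have GV: "2 ^ N \<le> M_L L n * (1 + card B)" using GV_bound[of n L] unfolding B_def N by simp
  have Bsub: "B \<subseteq> {D \<in> Pow (EE n). real (card D) \<le> \<delta> * real N}"
  proof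
    fix D assume "D \<in> B"
    then have "D \<subseteq> EE n" "\<not> contains_subgraph n L D" unfolding B_def graphs_on_EE by auto
    then have "\<not> (\<delta> * real N \<le> real (card D))" using free_small by blast
    then have "real (card D) \<le> \<delta> * real N" by linarith
    then show "D \<in> {D \<in> Pow (EE n). real (card D) \<le> \<delta> * real N}" using \<open>D \<subseteq> EE n\<close> by blast
  qed
  have cB: "real (card B) * \<delta> powr (\<delta> * real N) \<le> (1 + \<delta>) ^ N"
  proof -
    have "card B \<le> card {D \<in> Pow (EE n). real (card D) \<le> \<delta> * real N}"
      by (rule card_mono[OF _ Bsub]) (simp add: finite_EE)
    then have "real (card B) * \<delta> powr (\<delta> * real N) \<le> real (card {D \<in> Pow (EE n). real (card D) \<le> \<delta> * real N}) * \<delta> powr (\<delta> * real N)"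
      by (intro mult_right_mono) auto
    also have "\<dots> \<le> (1 + \<delta>) ^ N"
      using count_small[OF finite_EE \<delta>, of n "\<delta> * real N"] card_EE[of n] N by simp
    finally show ?thesis .
  qed
  have ppos: "0 < \<delta> powr (\<delta> * real N)" using \<delta> by simp
  have ple1: "\<delta> powr (\<delta> * real N) \<le> 1"
    using powr_mono'[of 0 "\<delta> * real N" \<delta>] \<delta> by simp
  have num1: "1 \<le> (1 + \<delta>) ^ N" using \<delta> by simp
  have X1: "1 \<le> X" unfolding X_def using ppos ple1 num1 by (simp add: field_simps)
  have cBX: "real (card B) \<le> X" unfolding X_def using cB ppos by (simp add: field_simps)
  have Mpos: "0 < real (M_L L n)" using M_pos[of L n] by simp
  have "real (2 ^ N) \<le> real (M_L L n * (1 + card B))" using GV by (simp only: of_nat_le_iff)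
  then have "(2::real) ^ N \<le> real (M_L L n) * (1 + real (card B))" by (simp add: algebra_simps)
  also have "\<dots> \<le> real (M_L L n) * (2 * X)"
    by (rule mult_left_mono) (use X1 cBX Mpos in auto)
  finally have ineq: "(2::real) ^ N \<le> real (M_L L n) * (2 * X)" .
  have Xpos: "0 < X" using X1 by simp
  have "real N = log 2 ((2::real) ^ N)" by simp
  also have "\<dots> \<le> log 2 (real (M_L L n) * (2 * X))"
    using ineq Mpos Xpos by (subst log_le_cancel_iff) auto
  also have "\<dots> = log 2 (real (M_L L n)) + 1 + log 2 X"
    using Mpos Xpos by (simp add: log_mult)
  also have "log 2 X = real N * log 2 (1 + \<delta>) - \<delta> * real N * log 2 \<delta>"
  proof -
    have "log 2 X = log 2 ((1 + \<delta>) ^ N) - log 2 (\<delta> powr (\<delta> * real N))"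
      unfolding X_def using ppos \<delta> by (simp only: log_divide) simp
    also have "log 2 ((1 + \<delta>) ^ N) = real N * log 2 (1 + \<delta>)" using \<delta> by (intro log_nat_power) linarith
    also have "log 2 (\<delta> powr (\<delta> * real N)) = \<delta> * real N * log 2 \<delta>" by (rule log_powr)
    finally show ?thesis .
  qed
  finally have "real N \<le> log 2 (real (M_L L n)) + 1 + (real N * log 2 (1 + \<delta>) - \<delta> * real N * log 2 \<delta>)" .
  moreover have "log 2 (1 / \<delta>) = - log 2 \<delta>" using \<delta> by (simp add: log_divide)
  then have "real N * (log 2 (1 + \<delta>) + \<delta> * log 2 (1 / \<delta>)) = real N * log 2 (1 + \<delta>) - \<delta> * real N * log 2 \<delta>"
    by (simp add: algebra_simps)
  ultimately show ?thesis by linarith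
qed


lemma ratio_upper: "log 2 (real (M_L L n)) \<le> real (n choose 2)"
proof -
  have M1: "0 < real (M_L L n)" using M_pos[of L n] by simp
  have "real (M_L L n) \<le> 2 ^ (n choose 2)"
  proof -
    have "real (M_L L n) \<le> real (2 ^ (n choose 2))" using M_le[of L n] by (simp only: of_nat_le_iff)
    then show ?thesis by simp
  qed
  then have "log 2 (real (M_L L n)) \<le> log 2 (2 ^ (n choose 2))" using M1 by (subst log_le_cancel_iff) auto
  then show ?thesis by simp
qed

lemma part1:
  fixes t :: "nat \<Rightarrow> nat"
  assumes o: "(\<lambda>n. real (t n)) \<in> o(\<lambda>n. log 2 (real n))"
  shows "(\<lambda>n. log 2 (real (M_L (K_bip (t n)) n)) / real (n choose 2)) \<longlonglongrightarrow> 1"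
proof (rule LIMSEQ_I)
  fix r :: real assume r: "0 < r"
  define g where "g = (\<lambda>x::real. log 2 (1 + x) + x * log 2 (1 / x))"
  have lim: "(g \<longlongrightarrow> 0) (at_right 0)" unfolding g_def by real_asymp
  have "\<forall>\<^sub>F x in at_right 0. g x < r / 2" using order_tendstoD(2)[OF lim, of "r / 2"] r by simp
  then obtain b where b: "b > 0" "\<forall>y>0. y < b \<longrightarrow> g y < r / 2"
    unfolding eventually_at_right_field by blast
  define \<delta> where "\<delta> = min (b / 2) 1"
  have \<delta>: "0 < \<delta>" "\<delta> \<le> 1" unfolding \<delta>_def using b by auto
  have g\<delta>: "g \<delta> < r / 2" using b \<delta> unfolding \<delta>_def by auto
  define L where "L = log 2 (16 / \<delta>)"
  have Lpos: "0 < L" unfolding L_def using \<delta> by (simp add: field_simps)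
  define \<eta> where "\<eta> = 1 / (2 * L)"
  have \<eta>pos: "0 < \<eta>" unfolding \<eta>_def using Lpos by simp
  have ev_t: "\<forall>\<^sub>F n in sequentially. norm (real (t n)) \<le> \<eta> * norm (log 2 (real n))"
    using landau_o.smallD[OF o \<eta>pos] .
  have ev_K: "\<forall>\<^sub>F n in sequentially. \<forall>t. 1 \<le> t \<and> real t \<le> log 2 (real n) / (2 * log 2 (16 / \<delta>)) \<longrightarrow>
            (\<forall>D. D \<subseteq> EE n \<and> \<delta> * real (n choose 2) \<le> real (card D) \<longrightarrow> contains_subgraph n (K_bip t) D)"
    by (rule KST_eventually[OF \<delta>])
  have ev_N0: "\<forall>\<^sub>F n in sequentially. 1 / (real n * (real n - 1) / 2) < r / 2" using r by real_asymp
  have ev_N: "\<forall>\<^sub>F n in sequentially. 1 / real (n choose 2) < r / 2"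
    using ev_N0 by (simp only: choose2_real)
  have ev_n: "\<forall>\<^sub>F n in sequentially. 2 \<le> n" by (rule eventually_ge_at_top)
  have "\<forall>\<^sub>F n in sequentially. norm (log 2 (real (M_L (K_bip (t n)) n)) / real (n choose 2) - 1) < r"
    using ev_t ev_K ev_N ev_n
  proof eventually_elim
    case (elim n)
    define N where "N = n choose 2"
    define M where "M = M_L (K_bip (t n)) n"
    have Npos': "0 < real N" unfolding N_def choose2_real using elim(4) by simp
    then have Npos: "0 < N" by simp
    have logn: "0 \<le> log 2 (real n)" using elim(4) by simp
    have free: "\<forall>D. D \<subseteq> EE n \<and> \<delta> * real N \<le> real (card D) \<longrightarrow> contains_subgraph n (K_bip (t n)) D"
    proof (cases "t n = 0")
      case True
      then show ?thesis using contains_K0 by simp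
    next
      case False
      have "real (t n) \<le> \<eta> * log 2 (real n)" using elim(1) logn by simp
      then have "real (t n) \<le> log 2 (real n) / (2 * log 2 (16 / \<delta>))"
        unfolding \<eta>_def L_def by simp
      then show ?thesis using elim(2) False unfolding N_def by simp
    qed
    have low: "real N - 1 - real N * g \<delta> \<le> log 2 (real M)"
      using part1_lower[OF \<delta> refl Npos[unfolded N_def] free[unfolded N_def]]
      unfolding g_def M_def N_def by simp
    have up: "log 2 (real M) \<le> real N" unfolding M_def N_def by (rule ratio_upper)
    have "log 2 (real M) / real N \<le> 1" using up Npos' by (simp add: divide_simps)
    moreover have "1 - 1 / real N - g \<delta> \<le> log 2 (real M) / real N"
    proof -
      have "(real N - 1 - real N * g \<delta>) / real N \<le> log 2 (real M) / real N"
        using low Npos' by (simp add: divide_right_mono)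
      moreover have "(real N - 1 - real N * g \<delta>) / real N = 1 - 1 / real N - g \<delta>"
        using Npos' by (simp add: field_simps)
      ultimately show ?thesis by simp
    qed
    moreover have "1 / real N < r / 2" using elim(3) unfolding N_def .
    ultimately show ?case using g\<delta> unfolding M_def N_def by (simp add: abs_if)
  qed
  then show "\<exists>no. \<forall>n\<ge>no. norm (log 2 (real (M_L (K_bip (t n)) n)) / real (n choose 2) - 1) < r"
    unfolding eventually_sequentially .
qed


lemma pow2_repr: "(0::real) < x \<Longrightarrow> x ^ k = 2 powr (real k * log 2 x)"
proof -
  assume x: "0 < x"
  have "x ^ k = x powr real k" using x by (simp add: powr_realpow)
  also have "\<dots> = (2 powr (log 2 x)) powr real k" using x by simp
  also have "\<dots> = 2 powr (real k * log 2 x)" by (simp add: powr_powr mult.commute)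
  finally show ?thesis .
qed

lemma part2_q:
  fixes t :: "nat \<Rightarrow> nat" and c q :: real
  assumes c: "c > 0" and tdef: "\<forall>n. t n = nat \<lfloor>c * log 2 (real n)\<rfloor>"
    and q: "0 < q" "q < 2 powr (- 2 / c)"
  shows "\<forall>\<^sub>F n in sequentially. log 2 (real (M_L (K_bip (t n)) n)) / real (n choose 2) \<le> 1 - q + 1 / real (n choose 2)"
proof -
  define \<gamma> where "\<gamma> = - log 2 q - 2 / c"
  have "log 2 q < log 2 (2 powr (- 2 / c))" using q by (subst log_less_cancel_iff) auto
  then have \<gamma>pos: "0 < \<gamma>" unfolding \<gamma>_def by simp
  have q1: "q < 1"
  proof -
    have "2 powr (- 2 / c) < 2 powr 0" using c by (intro powr_less_mono) auto
    then show ?thesis using q by simp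
  qed
  have ev1: "\<forall>\<^sub>F n in sequentially. (c * log 2 (real n) - 1) * \<gamma> > 2 / c" using c \<gamma>pos by real_asymp
  have ev2: "\<forall>\<^sub>F n in sequentially. c * log 2 (real n) - 1 \<ge> 1" using c by real_asymp
  have ev3: "\<forall>\<^sub>F n in sequentially. 2 \<le> n" by (rule eventually_ge_at_top)
  show ?thesis using ev1 ev2 ev3
  proof eventually_elim
    case (elim n)
    define T where "T = t n"
    define x where "x = c * log 2 (real n)"
    define N where "N = n choose 2"
    define m where "m = nat \<lfloor>q * real N\<rfloor>"
    have npos: "0 < real n" using elim(3) by simp
    have Npos: "0 < real N" unfolding N_def choose2_real using elim(3) by simp
    have x2: "2 \<le> x" using elim(2) unfolding x_def by simp
    have fl: "of_int \<lfloor>x\<rfloor> \<le> x" "x < of_int (\<lfloor>x\<rfloor> + 1)" using floor_correct[of x] by auto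
    have f0: "0 \<le> \<lfloor>x\<rfloor>" using x2 by simp
    have "real T = real (nat \<lfloor>x\<rfloor>)" using tdef unfolding T_def x_def by simp
    also have "\<dots> = of_int \<lfloor>x\<rfloor>" using f0 by simp
    finally have Teq: "real T = of_int \<lfloor>x\<rfloor>" .
    have Tx: "x - 1 \<le> real T" "real T \<le> x" using fl Teq by simp_all
    have T1: "1 \<le> real T" using Tx x2 by simp
    have flm: "of_int \<lfloor>q * real N\<rfloor> \<le> q * real N" "q * real N < of_int (\<lfloor>q * real N\<rfloor> + 1)"
      using floor_correct[of "q * real N"] by auto
    have fm0: "0 \<le> \<lfloor>q * real N\<rfloor>" using q Npos by simp
    have "real m = of_int \<lfloor>q * real N\<rfloor>" unfolding m_def using fm0 by simp
    then have mq: "real m \<le> q * real N" "q * real N - 1 \<le> real m" using flm by simp_all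
    have mN: "m \<le> N"
    proof -
      have "real m \<le> real N" using mq(1) q1 Npos q by (smt (verit) mult_less_cancel_right2)
      then show ?thesis by simp
    qed
    have logq: "log 2 q = - (2 / c) - \<gamma>" unfolding \<gamma>_def by simp
    have key: "2 * log 2 (real n) + real T * log 2 q < 0"
    proof -
      have "real T * (2 / c) \<ge> (x - 1) * (2 / c)" using Tx c by (intro mult_right_mono) auto
      moreover have "(x - 1) * (2 / c) = 2 * log 2 (real n) - 2 / c" unfolding x_def using c by (simp add: field_simps)
      moreover have "real T * \<gamma> \<ge> (x - 1) * \<gamma>" using Tx \<gamma>pos by (intro mult_right_mono) auto
      moreover have "(x - 1) * \<gamma> > 2 / c" using elim(1) unfolding x_def .
      ultimately have "real T * (2 / c + \<gamma>) > 2 * log 2 (real n)" by (simp add: algebra_simps)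
      then show ?thesis unfolding logq by (simp add: algebra_simps)
    qed
    have small: "real (n choose T) ^ 2 * (real m / real N) ^ (T ^ 2) < 1"
    proof -
      have "real (n choose T) ^ 2 \<le> (real n ^ T) ^ 2"
      proof -
        have "real (n choose T) \<le> real n ^ T" using binom_le_pow'[of n T] by (metis of_nat_le_iff of_nat_power)
        then show ?thesis by (intro power_mono) auto
      qed
      moreover have "(real m / real N) ^ (T ^ 2) \<le> q ^ (T ^ 2)"
        by (rule power_mono) (use mq Npos in \<open>auto simp: divide_simps\<close>)
      ultimately have "real (n choose T) ^ 2 * (real m / real N) ^ (T ^ 2) \<le> (real n ^ T) ^ 2 * q ^ (T ^ 2)"
        by (intro mult_mono) auto
      also have "\<dots> = 2 powr (real (2 * T) * log 2 (real n)) * 2 powr (real (T ^ 2) * log 2 q)"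
      proof -
        have a1: "(real n ^ T) ^ 2 = real n ^ (2 * T)" by (simp add: power_mult[symmetric] mult.commute)
        show ?thesis unfolding a1 pow2_repr[OF npos, of "2 * T"] pow2_repr[OF q(1), of "T ^ 2"] ..
      qed
      also have "\<dots> = 2 powr (real T * (2 * log 2 (real n) + real T * log 2 q))"
        by (simp add: powr_add[symmetric] algebra_simps power2_eq_square)
      also have "\<dots> < 2 powr 0"
        using key T1 by (intro powr_less_mono) (auto simp: mult_pos_neg)
      finally show ?thesis by simp
    qed
    obtain H where H: "H \<subseteq> EE n" "card H = m" "\<not> contains_subgraph n (K_bip T) H"
      using free_exists[OF mN[unfolded N_def] small[unfolded N_def]] by blast
    have "M_L (K_bip T) n \<le> 2 ^ (card (EE n - H))" by (rule M_upper_free[OF H(1) H(3)])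
    also have "card (EE n - H) = N - m" using H(1,2) card_Diff_subset[of H "EE n"] finite_EE card_EE
      unfolding N_def by (metis finite_subset)
    finally have Mle: "M_L (K_bip T) n \<le> 2 ^ (N - m)" .
    have M1: "0 < real (M_L (K_bip T) n)" using M_pos[of "K_bip T" n] by simp
    have "real (M_L (K_bip T) n) \<le> 2 ^ (N - m)"
    proof -
      have "real (M_L (K_bip T) n) \<le> real (2 ^ (N - m))" using Mle by (simp only: of_nat_le_iff)
      then show ?thesis by simp
    qed
    then have "log 2 (real (M_L (K_bip T) n)) \<le> log 2 (2 ^ (N - m))" using M1 by (subst log_le_cancel_iff) auto
    also have "\<dots> = real (N - m)" by simp
    also have "\<dots> = real N - real m" using mN by simp
    finally have "log 2 (real (M_L (K_bip T) n)) \<le> real N - q * real N + 1" using mq by linarith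
    then have "log 2 (real (M_L (K_bip T) n)) / real N \<le> (real N - q * real N + 1) / real N"
      using Npos by (simp add: divide_right_mono)
    also have "\<dots> = 1 - q + 1 / real N" using Npos by (simp add: field_simps)
    finally show ?case unfolding T_def N_def .
  qed
qed


lemma part2:
  fixes t :: "nat \<Rightarrow> nat" and c :: real
  assumes c: "c > 0" and tdef: "\<forall>n. t n = nat \<lfloor>c * log 2 (real n)\<rfloor>"
  shows "limsup (\<lambda>n. ereal (log 2 (real (M_L (K_bip (t n)) n)) / real (n choose 2)))
             \<le> ereal (1 - 2 powr (- 2 / c))"
proof (rule ereal_le_epsilon2)
  fix e :: real assume e: "0 < e"
  define p where "p = 2 powr (- 2 / c)"
  have ppos: "0 < p" unfolding p_def by simp
  define q where "q = max (p / 2) (p - e / 2)"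
  have q: "0 < q" "q < 2 powr (- 2 / c)" unfolding q_def p_def[symmetric] using ppos e by auto
  note ev1 = part2_q[OF c tdef q]
  have ev_N0: "\<forall>\<^sub>F n in sequentially. 1 / (real n * (real n - 1) / 2) < e / 2" using e by real_asymp
  have ev_N: "\<forall>\<^sub>F n in sequentially. 1 / real (n choose 2) < e / 2"
    using ev_N0 by (simp only: choose2_real)
  have "\<forall>\<^sub>F n in sequentially. ereal (log 2 (real (M_L (K_bip (t n)) n)) / real (n choose 2)) \<le> ereal (1 - p + e)"
    using ev1 ev_N
  proof eventually_elim
    case (elim n)
    have "1 - q \<le> 1 - p + e / 2" unfolding q_def by simp
    then show ?case using elim by simp
  qed
  then have "limsup (\<lambda>n. ereal (log 2 (real (M_L (K_bip (t n)) n)) / real (n choose 2))) \<le> ereal (1 - p + e)"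
    by (rule Limsup_bounded)
  then show "limsup (\<lambda>n. ereal (log 2 (real (M_L (K_bip (t n)) n)) / real (n choose 2)))
             \<le> ereal (1 - 2 powr (- 2 / c)) + ereal e" unfolding p_def by simp
qed

theorem theorem1p5:
  fixes t :: "nat \<Rightarrow> nat"
  shows "((\<lambda>n. real (t n)) \<in> o(\<lambda>n. log 2 (real n)) \<longrightarrow>
           (\<lambda>n. log 2 (real (M_L (K_bip (t n)) n)) / real (n choose 2)) \<longlonglongrightarrow> 1)
       \<and> (\<forall>c::real. c > 0 \<longrightarrow> (\<forall>n. t n = nat \<lfloor>c * log 2 (real n)\<rfloor>) \<longrightarrow>
           limsup (\<lambda>n. ereal (log 2 (real (M_L (K_bip (t n)) n)) / real (n choose 2)))
             \<le> ereal (1 - 2 powr (- 2 / c)))"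
  using part1[of t] part2[of _ t] by blast

end
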